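(* Fix integers $k \ge 3$ and $i \in \{2,\dots,k-1\}$, and let $T = \{1,\dots,k\}\setminus\{i\}$. Let $d \ge 1$ and let $X \subset \mathbb{Z}_k^d$ be a hole in $\mathbb{Z}_k^d$. Then for any distinct elements $x_1,\dots,x_m \in X$, the set $(X\setminus\{x_1,\dots,x_m\})^{\dagger m}$ is a hole in $\mathbb{Z}_k^{d+m}$.
   Context: $\mathbb{Z}_k$ denotes the integers modulo $k$, with elements $0,\dots,k-1$. A copy of $T$ in $\mathbb{Z}_k^e$ is a set $\{x + j e_s : j \in \mathbb{Z}_k,\ j \ne j_0\}$ for some $x \in \mathbb{Z}_k^e$, $s\in\{1,\dots,e\}$ ($e_s$ the $s$-th unit vector), $j_0\in\mathbb{Z}_k$ (a coordinate line minus one point). A set $Y \subset \mathbb{Z}_k^e$ is a hole in $\mathbb{Z}_k^e$ if $\mathbb{Z}_k^e \setminus Y$ is a disjoint union of copies of $T$. For $S \subset \mathbb{Z}_k^e$, define $S^{\dagger} = (S \times \{0\}) \cup \{c_{e+1,e+1}\} \subset \mathbb{Z}_k^{e+1}$, where $c_{e+1,e+1}$ is the point of $\mathbb{Z}_k^{e+1}$ with last coordinate $k-1$ and all other coordinates $0$. For $m\ge1$, $S^{\dagger m}$ denotes the result of $m$ consecutive applications of $\dagger$ to $S$ (each time in the dimension of the current ambient torus), a subset of $\mathbb{Z}_k^{e+m}$. *)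

theory Defs
  imports Main
begin

text \<open>Points of Z_k^e are lists of length e with entries in {0..<k};
  coordinate s (1-based in the paper) is list index s-1 here.\<close>

definition torus :: "nat \<Rightarrow> nat \<Rightarrow> nat list set" where
  "torus k e = {x. length x = e \<and> (\<forall>c\<in>set x. c < k)}"

definition copy_T :: "nat \<Rightarrow> nat \<Rightarrow> nat list set \<Rightarrow> bool" where
  "copy_T k e C \<longleftrightarrow> (\<exists>x s j0. x \<in> torus k e \<and> s < e \<and> j0 < k \<and>
      C = {x[s := (x ! s + j) mod k] | j. j < k \<and> j \<noteq> j0})"

definition is_hole :: "nat \<Rightarrow> nat \<Rightarrow> nat list set \<Rightarrow> bool" where
  "is_hole k e Y \<longleftrightarrow> Y \<subseteq> torus k e \<and>
     (\<exists>P. (\<forall>C\<in>P. copy_T k e C) \<and> pairwise disjnt P \<and> \<Union>P = torus k e - Y)"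

definition dagger :: "nat \<Rightarrow> nat \<Rightarrow> nat list set \<Rightarrow> nat list set" where
  "dagger k e S = (\<lambda>x. x @ [0]) ` S \<union> {replicate e 0 @ [k - 1]}"

fun dagger_pow :: "nat \<Rightarrow> nat \<Rightarrow> nat \<Rightarrow> nat list set \<Rightarrow> nat list set" where
  "dagger_pow k e 0 S = S"
| "dagger_pow k e (Suc m) S = dagger k (e + m) (dagger_pow k e m S)"

end

theory Submission imports Defs begin

definition lift :: "nat \<Rightarrow> nat list set \<Rightarrow> nat list set" where
  "lift t C = (\<lambda>x. x @ [t]) ` C"
definition col :: "nat \<Rightarrow> nat list \<Rightarrow> nat \<Rightarrow> nat list set" where
  "col k y t0 = {y @ [j] | j. j < k \<and> j \<noteq> t0}"

lemma torus_Suc: "w \<in> torus k (Suc e) \<longleftrightarrow> (\<exists>x t. w = x @ [t] \<and> x \<in> torus k e \<and> t < k)"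
  by (cases w rule: rev_cases) (auto simp: torus_def)

lemma torus_snoc[simp]: "x @ [t] \<in> torus k (Suc e) \<longleftrightarrow> x \<in> torus k e \<and> t < k"
  by (auto simp: torus_def)

lemma copy_lift:
  assumes "copy_T k e C" "t < k" shows "copy_T k (Suc e) (lift t C)"
proof -
  obtain x s j0 where h: "x \<in> torus k e" "s < e" "j0 < k"
    "C = {x[s := (x ! s + j) mod k] | j. j < k \<and> j \<noteq> j0}"
    using assms(1) unfolding copy_T_def by blast
  have "lift t C = {(x@[t])[s := ((x@[t]) ! s + j) mod k] | j. j < k \<and> j \<noteq> j0}"
    using h unfolding lift_def by (auto simp: torus_def list_update_append nth_append)
  moreover have "x @ [t] \<in> torus k (Suc e)" using h assms(2) by (auto simp: torus_def)
  ultimately show ?thesis unfolding copy_T_def using h(2,3) by (intro exI[of _ "x@[t]"] exI[of _ s] exI[of _ j0]) auto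
qed

lemma copy_col:
  assumes "y \<in> torus k e" "t0 < k" shows "copy_T k (Suc e) (col k y t0)"
proof -
  have "col k y t0 = {(y@[0])[e := ((y@[0]) ! e + j) mod k] | j. j < k \<and> j \<noteq> t0}"
    using assms unfolding col_def by (auto simp: torus_def list_update_append nth_append) (metis mod_less)
  moreover have "y @ [0] \<in> torus k (Suc e)" using assms by (auto simp: torus_def)
  ultimately show ?thesis unfolding copy_T_def using assms by (intro exI[of _ "y@[0]"] exI[of _ e] exI[of _ t0]) auto
qed

lemma layered:
  assumes PP: "\<And>t. t < k \<Longrightarrow> (\<forall>C\<in>PP t. copy_T k e C) \<and> pairwise disjnt (PP t) \<and> \<Union>(PP t) = torus k e - H t"
    and y: "y \<in> torus k e" and t0: "t0 < k" and yH: "\<And>t. t < k \<Longrightarrow> t \<noteq> t0 \<Longrightarrow> y \<in> H t"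
  defines "Q \<equiv> {lift t C | t C. t < k \<and> C \<in> PP t} \<union> {col k y t0}"
  shows "(\<forall>C\<in>Q. copy_T k (Suc e) C) \<and> pairwise disjnt Q \<and>
     \<Union>Q = {x @ [t] | x t. x \<in> torus k e \<and> t < k \<and> x \<notin> H t} \<union> col k y t0"
proof (intro conjI)
  show "\<forall>C\<in>Q. copy_T k (Suc e) C"
    unfolding Q_def using PP copy_lift copy_col y t0 by blast
  show "pairwise disjnt Q"
    unfolding pairwise_def disjnt_def
  proof (intro ballI impI)
    fix A B assume A: "A \<in> Q" and B: "B \<in> Q" and ne: "A \<noteq> B"
    have lc: "lift t C \<inter> col k y t0 = {}" if "t < k" "C \<in> PP t" for t C
    proof -
      have "y \<notin> C" if "t \<noteq> t0" using PP[OF \<open>t<k\<close>] yH[OF \<open>t<k\<close> that] \<open>C \<in> PP t\<close> by blast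
      thus ?thesis unfolding lift_def col_def by auto
    qed
    have ll: "lift t C \<inter> lift t' C' = {}" if "t < k" "C \<in> PP t" "t' < k" "C' \<in> PP t'"
      "lift t C \<noteq> lift t' C'" for t C t' C'
    proof (cases "t = t'")
      case True
      then have "C \<noteq> C'" using that by auto
      then have "C \<inter> C' = {}" using PP[OF \<open>t<k\<close>] that True unfolding pairwise_def disjnt_def by blast
      then show ?thesis unfolding lift_def by auto
    next
      case False then show ?thesis unfolding lift_def by auto
    qed
    show "A \<inter> B = {}" using A B ne lc ll unfolding Q_def by blast
  qed
  show "\<Union>Q = {x @ [t] | x t. x \<in> torus k e \<and> t < k \<and> x \<notin> H t} \<union> col k y t0"
  proof -
    have "\<Union>{lift t C | t C. t < k \<and> C \<in> PP t} = {x @ [t] | x t. x \<in> torus k e \<and> t < k \<and> x \<notin> H t}"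
    proof
      show "\<Union>{lift t C | t C. t < k \<and> C \<in> PP t} \<subseteq> {x @ [t] | x t. x \<in> torus k e \<and> t < k \<and> x \<notin> H t}"
      proof
        fix w assume "w \<in> \<Union>{lift t C | t C. t < k \<and> C \<in> PP t}"
        then obtain t C x where "t < k" "C \<in> PP t" "x \<in> C" "w = x @ [t]" unfolding lift_def by blast
        then show "w \<in> {x @ [t] | x t. x \<in> torus k e \<and> t < k \<and> x \<notin> H t}" using PP[of t] by blast
      qed
      show "{x @ [t] | x t. x \<in> torus k e \<and> t < k \<and> x \<notin> H t} \<subseteq> \<Union>{lift t C | t C. t < k \<and> C \<in> PP t}"
      proof
        fix w assume "w \<in> {x @ [t] | x t. x \<in> torus k e \<and> t < k \<and> x \<notin> H t}"
        then obtain x t where h: "w = x @ [t]" "x \<in> torus k e" "t < k" "x \<notin> H t" by blast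
        then obtain C where "C \<in> PP t" "x \<in> C" using PP[of t] by blast
        then show "w \<in> \<Union>{lift t C | t C. t < k \<and> C \<in> PP t}" using h unfolding lift_def by blast
      qed
    qed
    then show ?thesis unfolding Q_def by auto
  qed
qed

lemma point_hole:
  "a \<in> torus k e \<Longrightarrow> \<exists>P. (\<forall>C\<in>P. copy_T k e C) \<and> pairwise disjnt P \<and> \<Union>P = torus k e - {a}"
proof (induction e arbitrary: a)
  case 0
  then have "torus k 0 - {a} = {}" by (auto simp: torus_def)
  then show ?case by (intro exI[of _ "{}"]) auto
next
  case (Suc e)
  then obtain a' s where a: "a = a' @ [s]" "a' \<in> torus k e" "s < k" using Suc.prems unfolding torus_Suc by blast
  obtain P where P: "(\<forall>C\<in>P. copy_T k e C) \<and> pairwise disjnt P \<and> \<Union>P = torus k e - {a'}"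
    using Suc.IH[OF a(2)] by blast
  define Q where "Q = {lift t C | t C. t < k \<and> C \<in> (\<lambda>_. P) t} \<union> {col k a' s}"
  have L: "(\<forall>C\<in>Q. copy_T k (Suc e) C) \<and> pairwise disjnt Q \<and>
     \<Union>Q = {x @ [t] | x t. x \<in> torus k e \<and> t < k \<and> x \<notin> (\<lambda>_. {a'}) t} \<union> col k a' s"
    unfolding Q_def
  proof (rule layered)
    show "\<And>t. t < k \<Longrightarrow> (\<forall>C\<in>P. copy_T k e C) \<and> pairwise disjnt P \<and> \<Union>P = torus k e - {a'}"
      using P by blast
  qed (use a in auto)
  have "{x @ [t] | x t. x \<in> torus k e \<and> t < k \<and> x \<notin> (\<lambda>_. {a'}) t} \<union> col k a' s = torus k (Suc e) - {a}"
  proof (intro set_eqI iffI)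
    fix w assume "w \<in> {x @ [t] | x t. x \<in> torus k e \<and> t < k \<and> x \<notin> (\<lambda>_. {a'}) t} \<union> col k a' s"
    then show "w \<in> torus k (Suc e) - {a}" unfolding col_def using a by auto
  next
    fix w assume "w \<in> torus k (Suc e) - {a}"
    then obtain x t where "w = x @ [t]" "x \<in> torus k e" "t < k" "w \<noteq> a" using torus_Suc[of w k e] by blast
    then show "w \<in> {x @ [t] | x t. x \<in> torus k e \<and> t < k \<and> x \<notin> (\<lambda>_. {a'}) t} \<union> col k a' s"
      unfolding col_def using a by auto
  qed
  then show ?case using L by metis
qed


lemma key:
  assumes hole: "is_hole k e Y" and yY: "y \<in> Y" and k: "k \<ge> 2"
  shows "is_hole k (Suc e) (dagger k e (Y - {y}))"
proof -
  obtain P where P: "(\<forall>C\<in>P. copy_T k e C) \<and> pairwise disjnt P \<and> \<Union>P = torus k e - Y"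
    and Yt: "Y \<subseteq> torus k e" using hole unfolding is_hole_def by blast
  have yt: "y \<in> torus k e" using yY Yt by blast
  have zt: "replicate e 0 \<in> torus k e" using k by (auto simp: torus_def)
  obtain Py where Py: "(\<forall>C\<in>Py. copy_T k e C) \<and> pairwise disjnt Py \<and> \<Union>Py = torus k e - {y}"
    using point_hole[OF yt] by blast
  obtain P0 where P0: "(\<forall>C\<in>P0. copy_T k e C) \<and> pairwise disjnt P0 \<and> \<Union>P0 = torus k e - {replicate e 0}"
    using point_hole[OF zt] by blast
  define PP where "PP t = (if t = 0 then P else if t = k - 1 then P0 else Py)" for t
  define H where "H t = (if t = 0 then Y else if t = k - 1 then {replicate e 0} else {y})" for t
  define Q where "Q = {lift t C | t C. t < k \<and> C \<in> PP t} \<union> {col k y (k - 1)}"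
  have L: "(\<forall>C\<in>Q. copy_T k (Suc e) C) \<and> pairwise disjnt Q \<and>
     \<Union>Q = {x @ [t] | x t. x \<in> torus k e \<and> t < k \<and> x \<notin> H t} \<union> col k y (k - 1)"
    unfolding Q_def
  proof (rule layered)
    show "\<And>t. t < k \<Longrightarrow> (\<forall>C\<in>PP t. copy_T k e C) \<and> pairwise disjnt (PP t) \<and> \<Union>(PP t) = torus k e - H t"
      unfolding PP_def H_def using P P0 Py by auto
    show "\<And>t. t < k \<Longrightarrow> t \<noteq> k - 1 \<Longrightarrow> y \<in> H t" unfolding H_def using yY by auto
  qed (use yt k in auto)
  have E: "{x @ [t] | x t. x \<in> torus k e \<and> t < k \<and> x \<notin> H t} \<union> col k y (k - 1)
      = torus k (Suc e) - dagger k e (Y - {y})"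
  proof (intro set_eqI iffI)
    fix w assume "w \<in> {x @ [t] | x t. x \<in> torus k e \<and> t < k \<and> x \<notin> H t} \<union> col k y (k - 1)"
    then show "w \<in> torus k (Suc e) - dagger k e (Y - {y})"
      unfolding col_def dagger_def H_def using yt k by (auto split: if_splits)
  next
    fix w assume w: "w \<in> torus k (Suc e) - dagger k e (Y - {y})"
    then obtain x t where xt: "w = x @ [t]" "x \<in> torus k e" "t < k" using torus_Suc[of w k e] by blast
    have nd: "x @ [t] \<notin> dagger k e (Y - {y})" using w xt by simp
    show "w \<in> {x @ [t] | x t. x \<in> torus k e \<and> t < k \<and> x \<notin> H t} \<union> col k y (k - 1)"
    proof (cases "x \<in> H t")
      case False then show ?thesis using xt by blast
    next
      case True
      have "x = y \<and> t \<noteq> k - 1"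
      proof (cases "t = 0")
        case True
        then show ?thesis using \<open>x \<in> H t\<close> nd k unfolding H_def dagger_def by auto
      next
        case False
        show ?thesis
        proof (cases "t = k - 1")
          case True
          then have "x = replicate e 0" using \<open>x \<in> H t\<close> \<open>t \<noteq> 0\<close> unfolding H_def by auto
          then show ?thesis using nd True unfolding dagger_def by auto
        next
          case False
          then show ?thesis using \<open>x \<in> H t\<close> \<open>t \<noteq> 0\<close> unfolding H_def by auto
        qed
      qed
      then show ?thesis using xt unfolding col_def by blast
    qed
  qed
  have sub: "dagger k e (Y - {y}) \<subseteq> torus k (Suc e)"
    using Yt zt k unfolding dagger_def by auto
  show ?thesis unfolding is_hole_def using sub L E by metis
qed

lemma D1: "k \<ge> 2 \<Longrightarrow> dagger k e (S - {x}) = dagger k e S - {x @ [0]}"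
  unfolding dagger_def by auto

lemma D2: "k \<ge> 2 \<Longrightarrow> dagger_pow k e m (S - {x}) = dagger_pow k e m S - {x @ replicate m 0}"
proof (induction m)
  case 0 then show ?case by simp
next
  case (Suc m)
  have "x @ replicate (Suc m) 0 = (x @ replicate m 0) @ [0]"
    by (simp add: replicate_append_same[symmetric])
  then show ?case using Suc D1 by simp
qed

lemma D3: "x \<in> S \<Longrightarrow> x @ replicate m 0 \<in> dagger_pow k e m S"
proof (induction m)
  case 0 then show ?case by simp
next
  case (Suc m)
  have "x @ replicate (Suc m) 0 = (x @ replicate m 0) @ [0]"
    by (simp add: replicate_append_same[symmetric])
  then show ?case using Suc unfolding dagger_pow.simps dagger_def by simp
qed

lemma mainl:
  assumes "k \<ge> 2" "is_hole k d X"
  shows "distinct xs \<Longrightarrow> set xs \<subseteq> X \<Longrightarrow>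
    is_hole k (d + length xs) (dagger_pow k d (length xs) (X - set xs))"
proof (induction xs)
  case Nil then show ?case using assms by simp
next
  case (Cons x xs)
  let ?S = "X - set xs"
  have IH: "is_hole k (d + length xs) (dagger_pow k d (length xs) ?S)" using Cons by simp
  have xS: "x \<in> ?S" using Cons.prems by auto
  have eq: "X - set (x # xs) = ?S - {x}" by auto
  have "dagger_pow k d (length (x # xs)) (X - set (x # xs))
     = dagger k (d + length xs) (dagger_pow k d (length xs) ?S - {x @ replicate (length xs) 0})"
    unfolding eq using D2[OF assms(1)] by simp
  moreover have "is_hole k (Suc (d + length xs)) (dagger k (d + length xs) (dagger_pow k d (length xs) ?S - {x @ replicate (length xs) 0}))"
    by (rule key[OF IH D3[OF xS] assms(1)])
  ultimately show ?case by simp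
qed

theorem corollary6:
  fixes k i d :: nat and X :: "nat list set" and xs :: "nat list list"
  assumes "k \<ge> 3" and "2 \<le> i" and "i \<le> k - 1"
    and "d \<ge> 1"
    and "is_hole k d X"
    and "xs \<noteq> []" and "distinct xs" and "set xs \<subseteq> X"
  shows "is_hole k (d + length xs) (dagger_pow k d (length xs) (X - set xs))"
  using mainl[of k d X xs] assms by simp

end
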